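(* Let $d,H\in\mathbb{N}$, $d\geq2$, $0<s\leq\frac{1}{4}$, $N\geq(2\sqrt{d}/s)^3H^{\frac{1}{d-1}}$, let \[X_{1},X_{2},\ldots,X_{H}\subseteq \mathbb{R}^{d-1}\times [\tfrac{1}{2}+s,H+\tfrac{1}{2}-s]\] be pairwise disjoint, and suppose that $X:=\bigcup_{m=1}^{H}X_{m}$ is $s$-separated. Then there exists a $2^{8}N^{2}H^{2}$-bilipschitz mapping $\Psi\colon \mathbb{R}^{d}\to\mathbb{R}^{d}$ such that (i) $\Psi(x)=x$ for all $x\in\mathbb{R}^{d-1}\times(\mathbb{R}\setminus (\frac{1}{2},H+\frac{1}{2}))$; (ii) $\Psi(X_{m})\subseteq (\frac{1}{N}\mathbb{Z}^{d-1}\setminus \mathbb{Z}^{d-1})\times\{m\}$ for $m=1,2,\ldots,H$; (iii) $\|\pi(\Psi(x))-\pi(x)\|\leq s^{2}$ for all $x\in X$, where $\pi\colon\mathbb{R}^d\to\mathbb{R}^{d-1}$ is the projection onto the first $d-1$ coordinates.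
   Context: $\|\cdot\|$ is the Euclidean norm. A set is $s$-separated if distinct points are at Euclidean distance at least $s$. A mapping is $L$-bilipschitz if it is injective and both it and its inverse are $L$-Lipschitz. $N$ need not be an integer a priori; $\frac1N\mathbb{Z}^{d-1}=\{z/N: z\in\mathbb{Z}^{d-1}\}$. *)

theory Defs
  imports "HOL-Analysis.Analysis"
begin

text \<open>R^d is modelled as (real^'n) \<times> real with d - 1 = CARD('n); the product norm
  is Euclidean: norm (a,b) = sqrt (norm a ^ 2 + b ^ 2).\<close>

definition bilipschitz :: "real \<Rightarrow> ('a::metric_space \<Rightarrow> 'b::metric_space) \<Rightarrow> bool" where
  "bilipschitz L f \<longleftrightarrow> inj f \<and> L-lipschitz_on UNIV f \<and> L-lipschitz_on (range f) (inv f)"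

definition s_separated :: "real \<Rightarrow> 'a::metric_space set \<Rightarrow> bool" where
  "s_separated s A \<longleftrightarrow> (\<forall>x\<in>A. \<forall>y\<in>A. x \<noteq> y \<longrightarrow> dist x y \<ge> s)"

definition scaled_lattice :: "real \<Rightarrow> (real^'n) set" where
  "scaled_lattice N = {z. \<forall>i. \<exists>k::int. z $ i = real_of_int k / N}"

definition int_lattice :: "(real^'n) set" where
  "int_lattice = {z. \<forall>i. z $ i \<in> \<int>}"

end

theory Submission
  imports Defs
begin


definition bump :: "'a::real_normed_vector set \<Rightarrow> real \<Rightarrow> ('a \<Rightarrow> 'b::real_normed_vector) \<Rightarrow> 'a \<Rightarrow> 'b" where
"bump C r u z = (if \<exists>c\<in>C. dist z c < r then (let c = (SOME c. c \<in> C \<and> dist z c < r) in (1 - dist z c / r) *\<^sub>R u c) else 0)"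

lemma bump_unique:
  assumes "s_separated (2*r) C" "c \<in> C" "c' \<in> C" "dist z c < r" "dist z c' < r"
  shows "c = c'"
proof (rule ccontr)
  assume "c \<noteq> c'"
  then have "dist c c' \<ge> 2*r" using assms unfolding s_separated_def by auto
  moreover have "dist c c' \<le> dist z c + dist z c'" using dist_triangle[of c c' z] by (simp add: dist_commute)
  ultimately show False using assms by linarith
qed

lemma bump_at:
  assumes "s_separated (2*r) C" "c \<in> C" "dist z c < r"
  shows "bump C r u z = (1 - dist z c / r) *\<^sub>R u c"
proof -
  have ex: "\<exists>c. c \<in> C \<and> dist z c < r" using assms by auto
  define c' where "c' = (SOME c. c \<in> C \<and> dist z c < r)"
  have c': "c' \<in> C \<and> dist z c' < r" unfolding c'_def using someI_ex[OF ex] .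
  then have "c' = c" using bump_unique[OF assms(1) _ assms(2)] assms(3) by blast
  then show ?thesis unfolding bump_def c'_def[symmetric] using assms by (auto simp: Let_def)
qed

lemma bump_out:
  assumes "\<forall>c\<in>C. dist z c \<ge> r"
  shows "bump C r u z = 0"
  using assms unfolding bump_def by force

lemma bump_form:
  assumes "s_separated (2*r) C" "r > 0"
  shows "\<exists>c l. (l = 0 \<or> c \<in> C) \<and> 0 \<le> l \<and> l \<le> 1 \<and> (\<forall>u. bump C r u z = l *\<^sub>R u c)"
proof (cases "\<exists>c\<in>C. dist z c < r")
  case True
  then obtain c where c: "c \<in> C" "dist z c < r" by auto
  have l: "0 \<le> 1 - dist z c / r" "1 - dist z c / r \<le> 1" using c assms(2) by (auto simp: field_simps)
  have e: "\<forall>u. bump C r u z = (1 - dist z c / r) *\<^sub>R u c"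
    by (intro allI bump_at[OF assms(1) c])
  show ?thesis
    by (rule exI[of _ c], rule exI[of _ "1 - dist z c / r"]) (intro conjI l e disjI2 c(1))
next
  case False
  have "\<forall>c\<in>C. dist z c \<ge> r" using False by (simp add: not_less)
  then have e: "\<forall>u. bump C r u z = (0::real) *\<^sub>R u undefined" by (simp add: bump_out)
  show ?thesis
    by (rule exI[of _ undefined], rule exI[of _ 0]) (intro conjI e disjI1 refl order_refl zero_le_one)
qed

lemma bump_bound:
  assumes "s_separated (2*r) C" "r > 0" "\<forall>c\<in>C. norm (u c) \<le> M" "c \<in> C" "dist z c < r"
  shows "norm (bump C r u z) \<le> (M / r) * (r - dist z c)"
proof -
  have "norm (bump C r u z) = \<bar>1 - dist z c / r\<bar> * norm (u c)" unfolding bump_at[OF assms(1,4,5)] by simp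
  also have "\<bar>1 - dist z c / r\<bar> = (r - dist z c) / r" using assms(2,5) by (simp add: field_simps)
  also have "(r - dist z c) / r * norm (u c) \<le> (r - dist z c) / r * M"
    using assms by (intro mult_left_mono) auto
  finally show ?thesis by (simp add: field_simps)
qed

lemma bump_lip:
  assumes "s_separated (2*r) C" "r > 0" "\<forall>c\<in>C. norm (u c) \<le> M" and M0: "M \<ge> 0"
  shows "norm (bump C r u a - bump C r u b) \<le> (M / r) * dist a b"
proof -
  have kk: "k*(r-x) + k*(r-y) = k*(2*r-x-y)" for k x y :: real by (simp add: algebra_simps)
  have M: "M \<ge> 0" if "c \<in> C" for c using assms(3) that norm_ge_zero order_trans by blast
  show ?thesis
  proof (cases "\<exists>c\<in>C. dist a c < r")
    case True
    then obtain c where c: "c \<in> C" "dist a c < r" by auto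
    have M0: "M / r \<ge> 0" using M[OF c(1)] assms(2) by simp
    have ba: "norm (bump C r u a) \<le> (M / r) * (r - dist a c)" using bump_bound[OF assms(1-3) c] .
    show ?thesis
    proof (cases "\<exists>c\<in>C. dist b c < r")
      case True
      then obtain c' where c': "c' \<in> C" "dist b c' < r" by auto
      show ?thesis
      proof (cases "c = c'")
        case True
        have "bump C r u a - bump C r u b = ((dist b c - dist a c) / r) *\<^sub>R u c"
          unfolding bump_at[OF assms(1) c] bump_at[OF assms(1) c'] True[symmetric]
          by (simp add: algebra_simps diff_divide_distrib scaleR_diff_left)
        then have "norm (bump C r u a - bump C r u b) = (\<bar>dist b c - dist a c\<bar> / r) * norm (u c)"
          using assms(2) by simp
        also have "\<dots> \<le> (dist a b / r) * M"
        proof (intro mult_mono divide_right_mono)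
          show "\<bar>dist b c - dist a c\<bar> \<le> dist a b"
            using dist_triangle[of b c a] dist_triangle[of a c b] by (simp add: dist_commute abs_le_iff)
        qed (use assms c in auto)
        also have "(dist a b / r) * M = (M / r) * dist a b" by simp
        finally show ?thesis .
      next
        case False
        then have "dist c c' \<ge> 2 * r" using assms(1) c c' unfolding s_separated_def by auto
        moreover have "dist c c' \<le> dist a c + dist a b + dist b c'"
          using dist_triangle[of c c' a] dist_triangle[of a c' b] by (simp add: dist_commute)
        ultimately have key: "2 * r - dist a c - dist b c' \<le> dist a b" by linarith
        have bb: "norm (bump C r u b) \<le> (M / r) * (r - dist b c')" using bump_bound[OF assms(1-3) c'] .
        have "norm (bump C r u a - bump C r u b) \<le> norm (bump C r u a) + norm (bump C r u b)"
          by (rule norm_triangle_ineq4)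
        also have "\<dots> \<le> (M / r) * (r - dist a c) + (M / r) * (r - dist b c')" using add_mono[OF ba bb] .
        also have "\<dots> = (M / r) * (2 * r - dist a c - dist b c')"
          using kk[of "M/r"] .
        also have "\<dots> \<le> (M / r) * dist a b" using key M0 by (intro mult_left_mono) auto
        finally show ?thesis .
      qed
    next
      case False
      then have "bump C r u b = 0" by (intro bump_out) auto
      moreover have "r - dist a c \<le> dist a b"
        using False c dist_triangle[of b c a] by (auto simp: dist_commute)
      ultimately show ?thesis using order_trans[OF ba mult_left_mono[OF \<open>r - dist a c \<le> dist a b\<close> M0]] by simp
    qed
  next
    case False
    then have a0: "bump C r u a = 0" by (intro bump_out) auto
    show ?thesis
    proof (cases "\<exists>c\<in>C. dist b c < r")
      case True
      then obtain c where c: "c \<in> C" "dist b c < r" by auto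
      have M0: "M / r \<ge> 0" using M[OF c(1)] assms(2) by simp
      have bb: "norm (bump C r u b) \<le> (M / r) * (r - dist b c)" using bump_bound[OF assms(1-3) c] .
      have "r - dist b c \<le> dist a b"
        using False c dist_triangle[of a c b] by (auto simp: dist_commute)
      then show ?thesis using a0 order_trans[OF bb mult_left_mono[OF \<open>r - dist b c \<le> dist a b\<close> M0]]
        by (simp add: norm_minus_commute)
    next
      case False
      then have "bump C r u b = 0" by (intro bump_out) auto
      then show ?thesis using a0 assms M0 by simp
    qed
  qed
qed

lemma bilipI:
  assumes "L \<ge> 0" "\<And>a b. dist (f a) (f b) \<le> L * dist a b" "\<And>a b. dist a b \<le> L * dist (f a) (f b)"
  shows "bilipschitz L f"
proof -
  have inj: "inj f"
  proof (rule injI)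
    fix a b assume "f a = f b" then show "a = b" using assms(3)[of a b] by simp
  qed
  show ?thesis unfolding bilipschitz_def
  proof (intro conjI inj lipschitz_onI assms(1))
    fix x y show "dist (f x) (f y) \<le> L * dist x y" by (rule assms(2))
  next
    fix x y assume "x \<in> range f" "y \<in> range f"
    then obtain a b where "x = f a" "y = f b" by auto
    then show "dist (inv f x) (inv f y) \<le> L * dist x y" using assms(3)[of a b] inv_f_f[OF inj] by simp
  qed
qed



lemma numeric:
  fixes D H :: nat and s N :: real
  assumes D: "D \<ge> 1" and H: "H \<ge> 1" and s: "0 < s" "s \<le> 1/4"
    and N: "N \<ge> (2 * sqrt (real (D + 1)) / s) ^ 3 * real H powr (1 / real D)"
  shows "N \<ge> 8/s" "real (nat \<lfloor>2*H/s\<rfloor> + 1) \<le> real (nat (\<lfloor>s^2/D * N\<rfloor> - 1)) ^ D"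
proof -
  define Hr where "Hr = real H powr (1 / real D)"
  have Hr1: "Hr \<ge> 1" unfolding Hr_def using H by (intro ge_one_powr_ge_zero) auto
  have HrD: "Hr ^ D = real H" unfolding Hr_def using H D
    by (simp add: powr_realpow[symmetric] powr_powr)
  have sq1: "sqrt (real (D+1)) \<ge> 1" by simp
  have "sqrt (real (D + 1)) ^ 3 = real (D+1) * sqrt (real (D+1))"
    by (simp add: power3_eq_cube)
  also have "\<dots> \<ge> real (D+1) * 1" using sq1 by (intro mult_left_mono) auto
  finally have sq: "sqrt (real (D + 1)) ^ 3 \<ge> real D" by simp
  have s3p: "s^3 > 0" using s by simp
  have "(2 * sqrt (real (D + 1)) / s) ^ 3 = 8 * sqrt (real (D + 1)) ^ 3 / s^3"
    by (simp add: power_divide power_mult_distrib)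
  also have "\<dots> \<ge> 8 * D / s^3" using sq s3p by (intro divide_right_mono) auto
  finally have c3: "(2 * sqrt (real (D + 1)) / s) ^ 3 \<ge> 8 * D / s^3" .
  have "(2 * sqrt (real (D + 1)) / s) ^ 3 * Hr \<ge> 8 * D / s^3 * Hr"
    using c3 Hr1 by (intro mult_right_mono) auto
  then have NB: "N \<ge> 8 * D / s^3 * Hr" using N unfolding Hr_def by linarith
  have ss: "s * s \<le> 1" using s by (intro mult_le_one) auto
  have s3: "s^3 \<le> s" using mult_left_mono[OF ss, of s] s by (simp add: power3_eq_cube)
  have "8 * D / s^3 * Hr \<ge> 8 / s^3 * 1"
  proof (rule mult_mono)
    show "8 / s^3 \<le> 8 * D / s^3" using D s3p by (intro divide_right_mono) auto
  qed (use Hr1 s3p in auto)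
  moreover have "8 / s^3 \<ge> 8 / s" using s s3 s3p by (intro divide_left_mono) auto
  ultimately show "N \<ge> 8/s" using NB by linarith
  have lN: "s^2/D * N \<ge> 8 * Hr / s"
  proof -
    have "s^2/D * N \<ge> s^2/D * (8 * D / s^3 * Hr)" using NB s D by (intro mult_left_mono) auto
    also have "s^2/D * (8 * D / s^3 * Hr) = 8 * Hr / s" using s D by (simp add: field_simps power2_eq_square power3_eq_cube)
    finally show ?thesis .
  qed
  have "4 / s \<ge> 16" using s by (simp add: field_simps)
  then have "4 / s * Hr \<ge> 16 * 1" using Hr1 s by (intro mult_mono) auto
  moreover have "8 * Hr / s = 4 / s * Hr + 4 / s * Hr" by simp
  ultimately have q: "real_of_int (\<lfloor>s^2/D * N\<rfloor> - 1) \<ge> (4/s) * Hr"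
  proof -
    have "s^2/D*N < real_of_int \<lfloor>s^2/D*N\<rfloor> + 1" using floor_correct[of "s^2/D*N"] by simp
    then show ?thesis using lN \<open>8 * Hr / s = 4 / s * Hr + 4 / s * Hr\<close> \<open>4 / s * Hr \<ge> 16 * 1\<close>
      by linarith
  qed
  have q0: "(4/s) * Hr \<ge> 0" using s Hr1 by simp
  have "real (nat (\<lfloor>s^2/D * N\<rfloor> - 1)) = real_of_int (\<lfloor>s^2/D * N\<rfloor> - 1)" using q q0 by simp
  then have A: "real (nat (\<lfloor>s^2/D * N\<rfloor> - 1)) ^ D \<ge> ((4/s) * Hr) ^ D"
    using power_mono[OF q q0, of D] by simp
  have B: "((4/s) * Hr) ^ D = (4/s)^D * H" unfolding power_mult_distrib HrD ..
  have "4/s \<ge> 1" using s by (simp add: field_simps)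
  then have C: "(4/s)^D \<ge> 4/s" using power_increasing[of 1 D "4/s"] D by simp
  have is4: "1/s \<ge> 4" using s by (simp add: field_simps)
  have "2*real H*(1/s) \<ge> 2*1*4" using is4 H by (intro mult_mono) auto
  then have "2*H/s \<ge> 8" by simp
  moreover have "(4/s) * H = 2*H/s + 2*H/s" by simp
  ultimately have E: "(4/s) * H \<ge> 2*H/s + 1" by linarith
  have F: "real (nat \<lfloor>2*H/s\<rfloor> + 1) \<le> 2*H/s + 1"
    using s of_int_floor_le[of "2*H/s"] by (simp add: of_nat_nat)
  have G: "(4/s)^D * H \<ge> (4/s) * H" using C by (intro mult_right_mono) auto
  show "real (nat \<lfloor>2*H/s\<rfloor> + 1) \<le> real (nat (\<lfloor>s^2/D * N\<rfloor> - 1)) ^ D"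
    using A B E F G by linarith
qed


lemma count_coord:
  fixes b l N :: real assumes "0 < l" "l < 1" "N > 0"
  shows "finite {j::int. b \<le> j/N \<and> j/N < b + l \<and> j/N \<notin> \<int>}"
    "card {j::int. b \<le> j/N \<and> j/N < b + l \<and> j/N \<notin> \<int>} \<ge> nat (\<lfloor>l*N\<rfloor> - 1)"
proof -
  define W where "W = {\<lceil>b*N\<rceil> ..< \<lceil>(b+l)*N\<rceil>}"
  have Weq: "{j::int. b \<le> j/N \<and> j/N < b + l} = W"
    unfolding W_def using assms(3) by (auto simp: field_simps ceiling_le_iff less_ceiling_iff)
  define Z where "Z = {j\<in>W. j/N \<in> \<int>}"
  have V: "{j::int. b \<le> j/N \<and> j/N < b + l \<and> j/N \<notin> \<int>} = W - Z"
    using Weq unfolding Z_def by blast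
  have fW: "finite W" unfolding W_def by simp
  then show "finite {j::int. b \<le> j/N \<and> j/N < b + l \<and> j/N \<notin> \<int>}" unfolding V by simp
  have ZW: "Z \<subseteq> W" unfolding Z_def by auto
  have fZ: "finite Z" using fW ZW finite_subset by blast
  have "card Z \<le> Suc 0"
    unfolding card_le_Suc0_iff_eq[OF fZ]
  proof (intro ballI)
    fix j1 j2 assume j: "j1 \<in> Z" "j2 \<in> Z"
    then obtain n1 n2 where n: "j1/N = of_int n1" "j2/N = of_int n2"
      unfolding Z_def by (auto elim!: Ints_cases)
    have r: "b \<le> j1/N" "j1/N < b + l" "b \<le> j2/N" "j2/N < b + l"
      using j Weq unfolding Z_def by auto
    have "\<bar>real_of_int (n1 - n2)\<bar> < 1" using r n assms(2) by auto
    then have "n1 = n2" by linarith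
    then have "j1/N = j2/N" using n by simp
    then show "j1 = j2" using assms(3) by (simp add: field_simps)
  qed
  have cW: "card W \<ge> nat \<lfloor>l*N\<rfloor>"
  proof -
    have "\<lceil>b*N\<rceil> + \<lfloor>l*N\<rfloor> - 1 < b*N + l*N"
      using ceiling_correct[of "b*N"] of_int_floor_le[of "l*N"] by linarith
    then have "\<lceil>b*N\<rceil> + \<lfloor>l*N\<rfloor> \<le> \<lceil>(b+l)*N\<rceil>"
      using le_of_int_ceiling[of "(b+l)*N"] by (simp add: distrib_right) linarith
    then show ?thesis unfolding W_def by simp
  qed
  have "card (W - Z) = card W - card Z" using card_Diff_subset[OF fZ ZW] .
  then show "card {j::int. b \<le> j/N \<and> j/N < b + l \<and> j/N \<notin> \<int>} \<ge> nat (\<lfloor>l*N\<rfloor> - 1)"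
    unfolding V using cW \<open>card Z \<le> Suc 0\<close> by linarith
qed

lemma dist_prod: "dist p q = sqrt ((norm (fst p - fst q))^2 + (snd p - snd q)^2)"
  for p q :: "'a::real_normed_vector \<times> real"
  by (cases p, cases q) (simp add: dist_Pair_Pair dist_norm norm_Pair)

lemma height_count:
  fixes P :: "((real^'n) \<times> real) set" and H :: nat
  assumes sep: "s_separated s P" and s: "0<s" "s \<le> 1/4"
    and sub: "P \<subseteq> UNIV \<times> {1/2+s .. real H + 1/2 - s}"
    and cl: "\<forall>p\<in>P. \<forall>q\<in>P. norm (fst p - fst q) < s^2"
  shows "finite P \<and> card P \<le> nat \<lfloor>2*H/s\<rfloor> + 1"
proof -
  define f where "f p = \<lfloor>(snd p - 1/2) * 2 / s\<rfloor>" for p :: "(real^'n) \<times> real"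
  have inj: "inj_on f P"
  proof (rule inj_onI, rule ccontr)
    fix p q assume pq: "p \<in> P" "q \<in> P" "f p = f q" "p \<noteq> q"
    have d: "dist p q \<ge> s" using sep pq unfolding s_separated_def by auto
    have X: "\<bar>(snd p - 1/2) * 2 / s - (snd q - 1/2) * 2 / s\<bar> < 1"
      using pq(3) unfolding f_def by linarith
    have Y: "(snd p - 1/2) * 2 / s - (snd q - 1/2) * 2 / s = (snd p - snd q) * (2 / s)"
      by (simp add: algebra_simps diff_divide_distrib)
    have Z: "\<bar>(snd p - snd q) * (2 / s)\<bar> = \<bar>snd p - snd q\<bar> * (2 / s)" unfolding abs_mult using s by simp
    have "\<bar>snd p - snd q\<bar> * (2 / s) < 1" using X unfolding Y Z .
    then have "\<bar>snd p - snd q\<bar> * (2 / s) * (s/2) < 1 * (s/2)" using s by (intro mult_strict_right_mono) auto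
    moreover have "\<bar>snd p - snd q\<bar> * (2 / s) * (s/2) = \<bar>snd p - snd q\<bar>" using s by simp
    ultimately have t: "\<bar>snd p - snd q\<bar> < s/2" by simp
    have n: "norm (fst p - fst q) < s^2" using cl pq by auto
    have "(norm (fst p - fst q))^2 \<le> (s^2)^2" using n by (intro power_mono) auto
    moreover have "(snd p - snd q)^2 \<le> (s/2)^2" using t
      by (metis abs_ge_zero less_imp_le power2_abs power_mono)
    moreover have "(s^2)^2 + (s/2)^2 < s^2"
    proof -
      have "s * s \<le> (1/4) * (1/4)" using s by (intro mult_mono) auto
      then have "s^2 \<le> 1/16" by (simp add: power2_eq_square)
      then have "(s^2)^2 \<le> s^2 * (1/16)" using s by (simp add: power2_eq_square mult_left_mono)
      then show ?thesis using s by (simp add: power2_eq_square field_simps)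
    qed
    ultimately have "(norm (fst p - fst q))^2 + (snd p - snd q)^2 < s^2" by linarith
    then have "dist p q < s" unfolding dist_prod using s
      by (metis real_sqrt_less_iff real_sqrt_abs abs_of_pos power2_eq_square)
    then show False using d by simp
  qed
  have img: "f ` P \<subseteq> {0 .. \<lfloor>2*H/s\<rfloor>}"
  proof
    fix x assume "x \<in> f ` P"
    then obtain p where p: "p \<in> P" "x = f p" by auto
    have "snd p \<ge> 1/2 + s" "snd p \<le> real H + 1/2 - s" using sub p by auto
    then have a: "(snd p - 1/2) * 2 \<ge> 0" "(snd p - 1/2) * 2 \<le> 2*H" using s by auto
    have "(snd p - 1/2) * 2 / s \<ge> 0" using a s by simp
    moreover have "(snd p - 1/2) * 2 / s \<le> 2*H/s" using a s by (intro divide_right_mono) auto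
    ultimately have "(snd p - 1/2) * 2 / s \<ge> 0" "(snd p - 1/2) * 2 / s \<le> 2*H/s" by auto
    then show "x \<in> {0 .. \<lfloor>2*H/s\<rfloor>}" unfolding p f_def by (auto intro: floor_mono)
  qed
  have fin: "finite P" using inj img finite_subset by (metis finite_atLeastAtMost_int finite_imageD)
  have "card P = card (f ` P)" using card_image[OF inj] by simp
  also have "\<dots> \<le> card {0 .. \<lfloor>2*H/s\<rfloor>}" using img by (intro card_mono) auto
  also have "\<dots> = nat \<lfloor>2*H/s\<rfloor> + 1"
  proof -
    have "\<lfloor>2*H/s\<rfloor> \<ge> 0" using s by simp
    moreover have "\<forall>k::int. k \<ge> 0 \<longrightarrow> nat (k + 1) = nat k + 1" by arith
    ultimately have "nat (\<lfloor>2*H/s\<rfloor> + 1) = nat \<lfloor>2*H/s\<rfloor> + 1" by blast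
    then show ?thesis by simp
  qed
  finally show ?thesis using fin by simp
qed



lemma floor_box:
  fixes x l :: real assumes "l > 0"
  shows "real_of_int \<lfloor>x/l\<rfloor> * l \<le> x" "x < real_of_int \<lfloor>x/l\<rfloor> * l + l"
proof -
  have a: "real_of_int \<lfloor>x/l\<rfloor> \<le> x/l" "x/l < real_of_int \<lfloor>x/l\<rfloor> + 1" by linarith+
  have "real_of_int \<lfloor>x/l\<rfloor> * l \<le> x/l * l" using a(1) assms by (intro mult_right_mono) auto
  then show "real_of_int \<lfloor>x/l\<rfloor> * l \<le> x" using assms by simp
  have "x/l * l < (real_of_int \<lfloor>x/l\<rfloor> + 1) * l" using a(2) assms by (intro mult_strict_right_mono) auto
  then show "x < real_of_int \<lfloor>x/l\<rfloor> * l + l" using assms by (simp add: distrib_right)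
qed

lemma floor_box_unique:
  fixes x l :: real assumes "l > 0" "real_of_int k * l \<le> x" "x < real_of_int k * l + l"
  shows "\<lfloor>x/l\<rfloor> = k"
proof -
  have "real_of_int k \<le> x/l" using assms by (simp add: field_simps)
  moreover have "x/l < real_of_int k + 1" using assms by (simp add: field_simps)
  ultimately show ?thesis by (simp add: floor_eq_iff)
qed

lemma assign:
  fixes XX :: "((real^'n) \<times> real) set" and H :: nat and s N :: real
  assumes H: "H \<ge> 1" and s: "0 < s" "s \<le> 1/4"
    and N: "N \<ge> (2 * sqrt (real (CARD('n) + 1)) / s) ^ 3 * real H powr (1 / real CARD('n))"
    and sub: "XX \<subseteq> UNIV \<times> {1/2 + s .. real H + 1/2 - s}" and sep: "s_separated s XX"
  shows "\<exists>y. inj_on y XX \<and> (\<forall>p\<in>XX. y p \<in> scaled_lattice N - int_lattice \<and> norm (y p - fst p) \<le> s^2)"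
proof -
  define D where "D = CARD('n)"
  have D1: "D \<ge> 1" unfolding D_def using zero_less_card_finite[where 'a='n] by linarith
  note num = numeric[OF D1 H s N[folded D_def]]
  have "8/s > 0" using s by simp
  then have Npos: "N > 0" using num(1) by linarith
  define l where "l = s^2 / D"
  have s2: "s^2 < 1"
  proof -
    have "s * s \<le> (1/4) * (1/4)" using s by (intro mult_mono) auto
    then show ?thesis by (simp add: power2_eq_square)
  qed
  have l0: "l > 0" unfolding l_def using s D1 by simp
  have l1: "l < 1"
  proof -
    have "s^2 / real D \<le> s^2 / 1" using D1 s by (intro divide_left_mono) auto
    then have "l \<le> s^2" unfolding l_def by simp
    then show ?thesis using s2 by linarith
  qed
  have Dl: "real D * l = s^2" unfolding l_def using D1 by simp
  define q where "q = nat (\<lfloor>l * N\<rfloor> - 1)"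
  have "real (nat \<lfloor>2*H/s\<rfloor> + 1) \<le> real q ^ D" using num(2) unfolding q_def l_def .
  then have cntn: "nat \<lfloor>2*H/s\<rfloor> + 1 \<le> q ^ D" by (metis of_nat_le_iff of_nat_power)
  define kf where "kf p = (\<lambda>i. \<lfloor>fst p $ i / l\<rfloor>)" for p :: "(real^'n) \<times> real"
  define V where "V k i = {j::int. real_of_int (k i) * l \<le> j/N \<and> j/N < real_of_int (k i) * l + l \<and> j/N \<notin> \<int>}"
    for k :: "'n \<Rightarrow> int" and i
  define P where "P k = {p\<in>XX. kf p = k}" for k
  have Vfin: "finite (V k i)" for k i
    using count_coord(1)[OF l0 l1 Npos, of "real_of_int (k i) * l"] unfolding V_def .
  have Vcard: "card (V k i) \<ge> q" for k i
    using count_coord(2)[OF l0 l1 Npos, of "real_of_int (k i) * l"] unfolding V_def q_def .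
  have PiEfin: "finite (PiE UNIV (V k))" for k by (intro finite_PiE) (auto simp: Vfin)
  have PiEcard: "card (PiE UNIV (V k)) \<ge> q ^ D" for k
  proof -
    have "q ^ D = (\<Prod>i\<in>(UNIV::'n set). q)" unfolding D_def by simp
    also have "\<dots> \<le> (\<Prod>i\<in>(UNIV::'n set). card (V k i))" by (intro prod_mono) (auto simp: Vcard)
    also have "\<dots> = card (PiE UNIV (V k))" by (simp add: card_PiE)
    finally show ?thesis .
  qed
  have box: "real_of_int (kf p i) * l \<le> fst p $ i \<and> fst p $ i < real_of_int (kf p i) * l + l" for p i
    unfolding kf_def using floor_box[OF l0] by auto
  have Pk: "finite (P k) \<and> card (P k) \<le> nat \<lfloor>2*H/s\<rfloor> + 1" for k
  proof (rule height_count)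
    show "s_separated s (P k)" using sep unfolding s_separated_def P_def by auto
    show "P k \<subseteq> UNIV \<times> {1/2 + s .. real H + 1/2 - s}" using sub unfolding P_def by auto
    show "0 < s" "s \<le> 1/4" using s by auto
    show "\<forall>p\<in>P k. \<forall>q\<in>P k. norm (fst p - fst q) < s^2"
    proof (intro ballI)
      fix p q assume pq: "p \<in> P k" "q \<in> P k"
      then have kk: "kf p = k" "kf q = k" unfolding P_def by auto
      have "\<bar>(fst p - fst q) $ i\<bar> < l" for i using box[of p i] box[of q i] kk by auto
      then have "(\<Sum>i\<in>UNIV. \<bar>(fst p - fst q) $ i\<bar>) < (\<Sum>i\<in>(UNIV::'n set). l)"
        by (intro sum_strict_mono) auto
      also have "\<dots> = s^2" using Dl unfolding D_def by simp
      finally show "norm (fst p - fst q) < s^2" using norm_le_l1_cart[of "fst p - fst q"] by linarith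
    qed
  qed
  have "\<exists>f. f ` P k \<subseteq> PiE UNIV (V k) \<and> inj_on f (P k)" for k
  proof (rule card_le_inj)
    show "finite (P k)" using Pk by blast
    show "finite (PiE UNIV (V k))" by (rule PiEfin)
    show "card (P k) \<le> card (PiE UNIV (V k))" using Pk[of k] cntn PiEcard[of k] by linarith
  qed
  then obtain \<iota> where \<iota>: "\<And>k. \<iota> k ` P k \<subseteq> PiE UNIV (V k) \<and> inj_on (\<iota> k) (P k)" by metis
  define y where "y p = (\<chi> i. real_of_int (\<iota> (kf p) p i) / N)" for p
  have inV: "\<iota> (kf p) p i \<in> V (kf p) i" if "p \<in> XX" for p i
  proof -
    have "p \<in> P (kf p)" using that unfolding P_def by auto
    then have "\<iota> (kf p) p \<in> PiE UNIV (V (kf p))" using \<iota> by blast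
    then show ?thesis by (auto simp: PiE_iff)
  qed
  have ybox: "real_of_int (kf p i) * l \<le> y p $ i \<and> y p $ i < real_of_int (kf p i) * l + l \<and> y p $ i \<notin> \<int>"
    if "p \<in> XX" for p i
    using inV[OF that, of i] unfolding V_def y_def by simp
  show ?thesis
  proof (intro exI[of _ y] conjI ballI)
    show "inj_on y XX"
    proof (rule inj_onI)
      fix p p' assume pp: "p \<in> XX" "p' \<in> XX" "y p = y p'"
      have kk: "kf p = kf p'"
      proof
        fix i
        have "\<lfloor>y p $ i / l\<rfloor> = kf p i" using ybox[OF pp(1), of i] floor_box_unique[OF l0] by blast
        moreover have "\<lfloor>y p' $ i / l\<rfloor> = kf p' i" using ybox[OF pp(2), of i] floor_box_unique[OF l0] by blast
        ultimately show "kf p i = kf p' i" using pp(3) by simp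
      qed
      have "\<iota> (kf p) p = \<iota> (kf p) p'"
      proof
        fix i
        have "y p $ i = y p' $ i" using pp(3) by simp
        then have "real_of_int (\<iota> (kf p) p i) / N = real_of_int (\<iota> (kf p) p' i) / N"
          unfolding y_def kk by simp
        then show "\<iota> (kf p) p i = \<iota> (kf p) p' i" using Npos by simp
      qed
      moreover have "p \<in> P (kf p)" "p' \<in> P (kf p)" using pp kk unfolding P_def by auto
      ultimately show "p = p'" using \<iota>[of "kf p"] by (meson inj_onD)
    qed
  next
    fix p assume p: "p \<in> XX"
    have "y p \<in> scaled_lattice N" unfolding scaled_lattice_def y_def by auto
    moreover have "y p \<notin> int_lattice" using ybox[OF p] unfolding int_lattice_def by auto
    ultimately show "y p \<in> scaled_lattice N - int_lattice" by simp
    have "\<bar>(y p - fst p) $ i\<bar> \<le> l" for i using ybox[OF p, of i] box[of p i] by auto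
    then have "(\<Sum>i\<in>UNIV. \<bar>(y p - fst p) $ i\<bar>) \<le> (\<Sum>i\<in>(UNIV::'n set). l)"
      by (intro sum_mono) auto
    also have "\<dots> = s^2" using Dl unfolding D_def by simp
    finally show "norm (y p - fst p) \<le> s^2" using norm_le_l1_cart[of "y p - fst p"] by linarith
  qed
qed



lemma dist_pair_le: "dist (a::'a::metric_space, x::real) (b, y) \<le> dist a b + \<bar>x - y\<bar>"
  unfolding dist_Pair_Pair using sqrt_sum_squares_le_sum[of "dist a b" "dist x y"]
  by (simp add: dist_real_def)

lemma bump_zero:
  assumes "\<forall>c\<in>C. u c = 0"
  shows "bump C r u z = 0"
proof (cases "\<exists>c\<in>C. dist z c < r")
  case True
  then have ex: "\<exists>c. c \<in> C \<and> dist z c < r" by auto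
  have "(SOME c. c \<in> C \<and> dist z c < r) \<in> C" using someI_ex[OF ex] by blast
  then show ?thesis unfolding bump_def using True assms by (simp add: Let_def)
next
  case False
  then show ?thesis unfolding bump_def by simp
qed

lemma lattice_sep:
  assumes "N > 0" "a \<in> scaled_lattice N" "b \<in> scaled_lattice N" "a \<noteq> b"
  shows "dist a b \<ge> 1/N"
proof -
  obtain i where i: "a $ i \<noteq> b $ i" using assms(4) by (metis vec_eq_iff)
  obtain k1 k2 :: int where k: "a $ i = k1 / N" "b $ i = k2 / N"
    using assms(2,3) unfolding scaled_lattice_def by blast
  have "k1 \<noteq> k2" using i k by auto
  then have "\<bar>real_of_int k1 - real_of_int k2\<bar> \<ge> 1" by linarith
  then have "\<bar>real_of_int k1 - real_of_int k2\<bar> / N \<ge> 1 / N" using assms(1) by (intro divide_right_mono) auto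
  also have "\<bar>real_of_int k1 - real_of_int k2\<bar> / N = \<bar>(real_of_int k1 - real_of_int k2) / N\<bar>"
    using assms(1) by (simp add: abs_divide)
  also have "\<dots> = \<bar>(a - b) $ i\<bar>" using k by (simp add: diff_divide_distrib)
  also have "\<dots> \<le> norm (a - b)" by (rule component_le_norm_cart)
  finally show ?thesis by (simp add: dist_norm)
qed

lemma step1:
  fixes g :: "'a::real_normed_vector \<Rightarrow> 'a"
  assumes "\<And>a b. norm (g a - g b) \<le> k * dist a b" "0 \<le> k" "k \<le> 1/2"
  shows "dist (a + g a) (b + g b) \<le> (3/2) * dist a b" "dist a b \<le> 2 * dist (a + g a) (b + g b)"
proof -
  have e: "(a + g a) - (b + g b) = (a - b) + (g a - g b)" by simp
  have "norm ((a - b) + (g a - g b)) \<le> norm (a - b) + norm (g a - g b)" by (rule norm_triangle_ineq)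
  also have "\<dots> \<le> dist a b + k * dist a b" using assms(1)[of a b] by (simp add: dist_norm)
  also have "\<dots> \<le> dist a b + (1/2) * dist a b" using assms(3) by (intro add_left_mono mult_right_mono) auto
  finally show "dist (a + g a) (b + g b) \<le> (3/2) * dist a b" unfolding dist_norm e by simp
  have "norm (a - b) \<le> norm ((a - b) + (g a - g b)) + norm (g a - g b)" using norm_triangle_ineq4[of "a - b + (g a - g b)" "g a - g b"] by simp
  also have "\<dots> \<le> norm ((a - b) + (g a - g b)) + (1/2) * dist a b"
    using assms(1)[of a b] assms(3) mult_right_mono[OF assms(3) zero_le_dist[of a b]] by linarith
  finally show "dist a b \<le> 2 * dist (a + g a) (b + g b)" unfolding dist_norm e by simp
qed

lemma mono_bounds:
  fixes f :: "real \<Rightarrow> real"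
  assumes "\<And>t1 t2. t1 \<le> t2 \<Longrightarrow> a*(t2-t1) \<le> f t2 - f t1 \<and> f t2 - f t1 \<le> b*(t2-t1)" "0 \<le> a"
  shows "a * \<bar>t1 - t2\<bar> \<le> \<bar>f t1 - f t2\<bar> \<and> \<bar>f t1 - f t2\<bar> \<le> b * \<bar>t1 - t2\<bar>"
proof (cases "t1 \<le> t2")
  case True
  have "a*(t2-t1) \<ge> 0" using True assms(2) by simp
  then show ?thesis using assms(1)[OF True] True by (simp add: abs_minus_commute abs_of_nonneg)
next
  case False
  then have F: "t2 \<le> t1" by simp
  have "a*(t1-t2) \<ge> 0" using F assms(2) by simp
  then show ?thesis using assms(1)[OF F] F by (simp add: abs_of_nonneg)
qed

lemma step2:
  fixes C :: "'a::real_normed_vector set" and hh :: "'a \<Rightarrow> real \<Rightarrow> real"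
  assumes sepC: "s_separated (2*r) C" and r: "r > 0"
    and mono: "\<And>c t1 t2. c \<in> C \<Longrightarrow> t1 \<le> t2 \<Longrightarrow> a*(t2-t1) \<le> hh c t2 - hh c t1 \<and> hh c t2 - hh c t1 \<le> b*(t2-t1)"
    and bd: "\<And>c t. c \<in> C \<Longrightarrow> \<bar>hh c t - t\<bar> \<le> M" and a: "0 < a" "a \<le> 1" and b: "1 \<le> b" and M: "M \<ge> 0"
  defines "F \<equiv> \<lambda>z t. t + bump C r (\<lambda>c. hh c t - t) z"
  shows "dist (z1, F z1 t1) (z2, F z2 t2) \<le> (1 + M/r + b) * dist (z1, t1) (z2, t2)"
    "dist (z1, t1) (z2, t2) \<le> (1 + (M/r)/a + 1/a) * dist (z1, F z1 t1) (z2, F z2 t2)"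
proof -
  have Fmono: "a*(t2-t1) \<le> F z t2 - F z t1 \<and> F z t2 - F z t1 \<le> b*(t2-t1)" if "t1 \<le> t2" for z t1 t2
  proof -
    obtain c l where cl: "l = 0 \<or> c \<in> C" "0 \<le> l" "l \<le> 1" "\<forall>u::'a \<Rightarrow> real. bump C r u z = l *\<^sub>R u c"
      using bump_form[OF sepC r, of z] by blast
    have FF: "F z t = t + l * (hh c t - t)" for t unfolding F_def using spec[OF cl(4), of "\<lambda>c. hh c t - t"] by simp
    have d: "F z t2 - F z t1 = (1 - l) * (t2 - t1) + l * (hh c t2 - hh c t1)"
      unfolding FF by (simp add: algebra_simps)
    have D0: "t2 - t1 \<ge> 0" using that by simp
    show ?thesis
    proof (cases "l = 0")
      case True
      have "a*(t2-t1) \<le> 1*(t2-t1)" "1*(t2-t1) \<le> b*(t2-t1)"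
        using D0 a b by (intro mult_right_mono; simp)+
      then show ?thesis unfolding d using True by simp
    next
      case False
      then have c: "c \<in> C" using cl(1) by simp
      note m = mono[OF c that]
      have "a*(t2-t1) = (1-l)*(a*(t2-t1)) + l*(a*(t2-t1))" by (simp add: algebra_simps)
      also have "\<dots> \<le> (1-l)*(t2-t1) + l*(hh c t2 - hh c t1)"
      proof (rule add_mono)
        show "(1-l)*(a*(t2-t1)) \<le> (1-l)*(t2-t1)" using cl a D0 by (intro mult_left_mono) (auto simp: mult_left_le_one_le)
        show "l*(a*(t2-t1)) \<le> l*(hh c t2 - hh c t1)" using cl m by (intro mult_left_mono) auto
      qed
      finally have lo: "a*(t2-t1) \<le> F z t2 - F z t1" unfolding d .
      have "(1-l)*(t2-t1) + l*(hh c t2 - hh c t1) \<le> (1-l)*(b*(t2-t1)) + l*(b*(t2-t1))"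
      proof (rule add_mono)
        have "1*(t2 - t1) \<le> b*(t2-t1)" using b D0 by (intro mult_right_mono) auto
        then have "t2 - t1 \<le> b*(t2-t1)" by simp
        then show "(1-l)*(t2-t1) \<le> (1-l)*(b*(t2-t1))" using cl by (intro mult_left_mono) auto
        show "l*(hh c t2 - hh c t1) \<le> l*(b*(t2-t1))" using cl m by (intro mult_left_mono) auto
      qed
      also have "\<dots> = b*(t2-t1)" by (simp add: algebra_simps)
      finally have hi: "F z t2 - F z t1 \<le> b*(t2-t1)" unfolding d .
      show ?thesis using lo hi by simp
    qed
  qed
  have Fb: "a * \<bar>x - y\<bar> \<le> \<bar>F w x - F w y\<bar> \<and> \<bar>F w x - F w y\<bar> \<le> b * \<bar>x - y\<bar>" for w x y
    using mono_bounds[of a "F w" b x y] Fmono a by auto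
  have Fl: "\<bar>F wa t - F wb t\<bar> \<le> (M/r) * dist wa wb" for wa wb t
  proof -
    have "F wa t - F wb t = bump C r (\<lambda>c. hh c t - t) wa - bump C r (\<lambda>c. hh c t - t) wb"
      unfolding F_def by simp
    moreover have "norm (bump C r (\<lambda>c. hh c t - t) wa - bump C r (\<lambda>c. hh c t - t) wb) \<le> (M/r) * dist wa wb"
      by (rule bump_lip[OF sepC r _ M]) (use bd in simp)
    ultimately show ?thesis by simp
  qed
  have dz: "dist z1 z2 \<le> dist (z1, t1) (z2, t2)" using dist_fst_le[of "(z1,t1)" "(z2,t2)"] by simp
  have dt: "\<bar>t1 - t2\<bar> \<le> dist (z1, t1) (z2, t2)" using dist_snd_le[of "(z1,t1)" "(z2,t2)"] by (simp add: dist_real_def)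
  have dz': "dist z1 z2 \<le> dist (z1, F z1 t1) (z2, F z2 t2)" using dist_fst_le[of "(z1,F z1 t1)" "(z2,F z2 t2)"] by simp
  have dt': "\<bar>F z1 t1 - F z2 t2\<bar> \<le> dist (z1, F z1 t1) (z2, F z2 t2)"
    using dist_snd_le[of "(z1,F z1 t1)" "(z2,F z2 t2)"] by (simp add: dist_real_def)
  have Mr: "M/r \<ge> 0" using M r by simp
  have tri: "\<bar>F z1 t1 - F z2 t2\<bar> \<le> \<bar>F z1 t1 - F z1 t2\<bar> + \<bar>F z1 t2 - F z2 t2\<bar>" by linarith
  have "dist (z1, F z1 t1) (z2, F z2 t2) \<le> dist z1 z2 + \<bar>F z1 t1 - F z2 t2\<bar>" by (rule dist_pair_le)
  also have "\<dots> \<le> dist z1 z2 + (b * \<bar>t1 - t2\<bar> + (M/r) * dist z1 z2)" using tri Fb[where w=z1 and x=t1 and y=t2] Fl[where wa=z1 and wb=z2 and t=t2] by linarith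
  also have "\<dots> \<le> dist (z1, t1) (z2, t2) + (b * dist (z1, t1) (z2, t2) + (M/r) * dist (z1, t1) (z2, t2))"
    using dz dt Mr b by (intro add_mono mult_left_mono) auto
  also have "\<dots> = (1 + M/r + b) * dist (z1, t1) (z2, t2)" by (simp add: algebra_simps)
  finally show "dist (z1, F z1 t1) (z2, F z2 t2) \<le> (1 + M/r + b) * dist (z1, t1) (z2, t2)" .
  have "a * \<bar>t1 - t2\<bar> \<le> \<bar>F z1 t1 - F z1 t2\<bar>" using Fb by blast
  also have "\<dots> \<le> \<bar>F z1 t1 - F z2 t2\<bar> + \<bar>F z1 t2 - F z2 t2\<bar>" by linarith
  also have "\<dots> \<le> \<bar>F z1 t1 - F z2 t2\<bar> + (M/r) * dist z1 z2" using Fl[where wa=z1 and wb=z2 and t=t2] by linarith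
  finally have "a * \<bar>t1 - t2\<bar> \<le> \<bar>F z1 t1 - F z2 t2\<bar> + (M/r) * dist z1 z2" .
  then have tt: "\<bar>t1 - t2\<bar> \<le> (1/a) * \<bar>F z1 t1 - F z2 t2\<bar> + ((M/r)/a) * dist z1 z2"
    using a by (simp add: field_simps)
  have "dist (z1, t1) (z2, t2) \<le> dist z1 z2 + \<bar>t1 - t2\<bar>" by (rule dist_pair_le)
  also have "\<dots> \<le> dist z1 z2 + ((1/a) * \<bar>F z1 t1 - F z2 t2\<bar> + ((M/r)/a) * dist z1 z2)" using tt by linarith
  also have "\<dots> \<le> dist (z1, F z1 t1) (z2, F z2 t2) + ((1/a) * dist (z1, F z1 t1) (z2, F z2 t2)
      + ((M/r)/a) * dist (z1, F z1 t1) (z2, F z2 t2))"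
  proof -
    have "(M/r)/a \<ge> 0" by (rule divide_nonneg_pos[OF Mr a(1)])
    then show ?thesis using dz' dt' a by (intro add_mono mult_left_mono) auto
  qed
  also have "\<dots> = (1 + (M/r)/a + 1/a) * dist (z1, F z1 t1) (z2, F z2 t2)" by (simp add: algebra_simps)
  finally show "dist (z1, t1) (z2, t2) \<le> (1 + (M/r)/a + 1/a) * dist (z1, F z1 t1) (z2, F z2 t2)" .
qed



definition hfun :: "nat \<Rightarrow> real \<Rightarrow> real \<Rightarrow> real \<Rightarrow> real" where
"hfun H t m x = x + ((m - 1/2)/(t - 1/2) - 1) * (max (1/2) (min x t) - 1/2)
   + ((real H + 1/2 - m)/(real H + 1/2 - t) - 1) * (max t (min x (real H + 1/2)) - t)"

lemma clamp_facts:
  fixes p q r x y :: real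
  assumes "p \<le> q" "q \<le> r" "x \<le> y"
  shows "0 \<le> max p (min y q) - max p (min x q)" "0 \<le> max q (min y r) - max q (min x r)"
    "(max p (min y q) - max p (min x q)) + (max q (min y r) - max q (min x r)) \<le> y - x"
  using assms by (auto simp: max_def min_def)

lemma hfun_props:
  fixes H :: nat and s t m :: real
  assumes H: "H \<ge> 1" and s: "0 < s" "s \<le> 1/4"
    and t: "1/2 + s \<le> t" "t \<le> real H + 1/2 - s" and m: "1 \<le> m" "m \<le> real H"
  shows "hfun H t m t = m"
    "x \<le> 1/2 \<or> x \<ge> real H + 1/2 \<Longrightarrow> hfun H t m x = x"
    "x \<le> y \<Longrightarrow> (1/(2*real H)) * (y - x) \<le> hfun H t m y - hfun H t m x
        \<and> hfun H t m y - hfun H t m x \<le> (real H/s) * (y - x)"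
    "\<bar>hfun H t m x - x\<bar> \<le> real H"
proof -
  define A where "A = t - 1/2"
  define B where "B = real H + 1/2 - t"
  define s1 where "s1 = (m - 1/2)/A"
  define s2 where "s2 = (real H + 1/2 - m)/B"
  have A: "A \<ge> s" "A \<le> real H - s" unfolding A_def using t by auto
  have B: "B \<ge> s" "B \<le> real H - s" unfolding B_def using t by auto
  have A0: "A > 0" and B0: "B > 0" using A B s by auto
  have s1A: "s1 * A = m - 1/2" unfolding s1_def using A0 by simp
  have s2B: "s2 * B = real H + 1/2 - m" unfolding s2_def using B0 by simp
  have hdef: "hfun H t m x = x + (s1 - 1) * (max (1/2) (min x t) - 1/2) + (s2 - 1) * (max t (min x (real H + 1/2)) - t)" for x
    unfolding hfun_def s1_def s2_def A_def B_def by simp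
  have Hpos: "real H \<ge> 1" using H by simp
  define a where "a = 1/(2*real H)"
  define b where "b = real H / s"
  have a0: "a > 0" and a1: "a \<le> 1" unfolding a_def using Hpos by auto
  have b1: "b \<ge> 1" unfolding b_def using Hpos s by (simp add: field_simps)
  have alow: "a \<le> (1/2) / real H" unfolding a_def by simp
  have s1lo: "a \<le> s1"
  proof -
    have "(1/2) / real H \<le> (m - 1/2) / A" using m A A0 s by (intro frac_le) auto
    then show ?thesis unfolding s1_def a_def by simp
  qed
  have s1hi: "s1 \<le> b"
  proof -
    have "(m - 1/2) / A \<le> real H / s" using m A A0 s by (intro frac_le) auto
    then show ?thesis unfolding s1_def b_def by simp
  qed
  have s2lo: "a \<le> s2"
  proof -
    have "(1/2) / real H \<le> (real H + 1/2 - m) / B" using m B B0 s by (intro frac_le) auto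
    then show ?thesis unfolding s2_def a_def by simp
  qed
  have s2hi: "s2 \<le> b"
  proof -
    have "(real H + 1/2 - m) / B \<le> real H / s" using m B B0 s by (intro frac_le) auto
    then show ?thesis unfolding s2_def b_def by simp
  qed
  have tge: "t \<ge> 1/2" "t \<le> real H + 1/2" using t s by auto
  show "hfun H t m t = m"
  proof -
    have "max (1/2) (min t t) - 1/2 = A" "max t (min t (real H + 1/2)) - t = 0"
      unfolding A_def using tge by auto
    then have "hfun H t m t = t + (s1 - 1) * A" unfolding hdef by simp
    also have "\<dots> = m"
    proof -
      have "(s1 - 1) * A = s1 * A - A" by (simp add: algebra_simps)
      then show ?thesis using s1A unfolding A_def by linarith
    qed
    finally show ?thesis .
  qed
  show h2: "hfun H t m x = x" if "x \<le> 1/2 \<or> x \<ge> real H + 1/2" for x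
  proof (cases "x \<le> 1/2")
    case True
    then have "max (1/2) (min x t) - 1/2 = 0" "max t (min x (real H + 1/2)) - t = 0" using tge by auto
    then show ?thesis unfolding hdef by simp
  next
    case False
    then have x: "x \<ge> real H + 1/2" using that by simp
    then have "max (1/2) (min x t) - 1/2 = A" "max t (min x (real H + 1/2)) - t = B"
      unfolding A_def B_def using tge by auto
    then have "hfun H t m x = x + (s1 - 1) * A + (s2 - 1) * B" unfolding hdef by simp
    also have "\<dots> = x + s1 * A + s2 * B - (A + B)" by (simp add: algebra_simps)
    also have "\<dots> = x" using s1A s2B unfolding A_def B_def by linarith
    finally show ?thesis .
  qed
  have h4: "a * (y - x) \<le> hfun H t m y - hfun H t m x \<and> hfun H t m y - hfun H t m x \<le> b * (y - x)"
    if xy: "x \<le> y" for x y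
  proof -
    define d1 where "d1 = max (1/2) (min y t) - max (1/2) (min x t)"
    define d2 where "d2 = max t (min y (real H + 1/2)) - max t (min x (real H + 1/2))"
    note cf = clamp_facts[OF tge(1) tge(2) xy]
    have d1: "d1 \<ge> 0" and d2: "d2 \<ge> 0" and R: "y - x - d1 - d2 \<ge> 0"
      using cf unfolding d1_def d2_def by auto
    have e: "hfun H t m y - hfun H t m x = (y - x - d1 - d2) + s1 * d1 + s2 * d2"
      unfolding hdef d1_def d2_def by (simp add: algebra_simps)
    have "a * (y - x) = a * (y - x - d1 - d2) + a * d1 + a * d2" by (simp add: algebra_simps)
    also have "\<dots> \<le> (y - x - d1 - d2) + s1 * d1 + s2 * d2"
    proof (intro add_mono)
      have "a * (y - x - d1 - d2) \<le> 1 * (y - x - d1 - d2)" using R a1 by (intro mult_right_mono) auto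
      then show "a * (y - x - d1 - d2) \<le> y - x - d1 - d2" by simp
      show "a * d1 \<le> s1 * d1" using s1lo d1 by (rule mult_right_mono)
      show "a * d2 \<le> s2 * d2" using s2lo d2 by (rule mult_right_mono)
    qed
    finally have lo: "a * (y - x) \<le> hfun H t m y - hfun H t m x" unfolding e .
    have "(y - x - d1 - d2) + s1 * d1 + s2 * d2 \<le> b * (y - x - d1 - d2) + b * d1 + b * d2"
    proof (intro add_mono)
      have "1 * (y - x - d1 - d2) \<le> b * (y - x - d1 - d2)" using R b1 by (intro mult_right_mono) auto
      then show "y - x - d1 - d2 \<le> b * (y - x - d1 - d2)" by simp
      show "s1 * d1 \<le> b * d1" using s1hi d1 by (rule mult_right_mono)
      show "s2 * d2 \<le> b * d2" using s2hi d2 by (rule mult_right_mono)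
    qed
    also have "\<dots> = b * (y - x)" by (simp add: algebra_simps)
    finally have hi: "hfun H t m y - hfun H t m x \<le> b * (y - x)" unfolding e .
    show ?thesis using lo hi by simp
  qed
  show "x \<le> y \<Longrightarrow> (1/(2*real H)) * (y - x) \<le> hfun H t m y - hfun H t m x
        \<and> hfun H t m y - hfun H t m x \<le> (real H/s) * (y - x)"
    using h4[of x y] unfolding a_def b_def by simp
  show "\<bar>hfun H t m x - x\<bar> \<le> real H"
  proof (cases "x \<le> 1/2 \<or> x \<ge> real H + 1/2")
    case True
    then show ?thesis using h2[OF True] by simp
  next
    case False
    then have x: "1/2 \<le> x" "x \<le> real H + 1/2" by auto
    have "a * (x - 1/2) \<ge> 0" using x a0 by simp
    then have l: "hfun H t m x \<ge> 1/2" using h4[OF x(1)] h2[of "1/2"] by simp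
    have "a * (real H + 1/2 - x) \<ge> 0" using x a0 by simp
    then have u: "hfun H t m x \<le> real H + 1/2" using h4[OF x(2)] h2[of "real H + 1/2"] by simp
    show ?thesis using l u x by linarith
  qed
qed



theorem lemma6p2:
  fixes X :: "nat \<Rightarrow> ((real^'n) \<times> real) set"
    and H :: nat and s N :: real
  assumes H: "H \<ge> 1"
    and s: "0 < s" "s \<le> 1/4"
    and N: "N \<ge> (2 * sqrt (real (CARD('n) + 1)) / s) ^ 3 * real H powr (1 / real CARD('n))"
    and Xsub: "\<forall>m\<in>{1..H}. X m \<subseteq> UNIV \<times> {1/2 + s .. real H + 1/2 - s}"
    and disj: "\<forall>m\<in>{1..H}. \<forall>m'\<in>{1..H}. m \<noteq> m' \<longrightarrow> X m \<inter> X m' = {}"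
    and sep: "s_separated s (\<Union>m\<in>{1..H}. X m)"
  shows "\<exists>\<Psi> :: (real^'n) \<times> real \<Rightarrow> (real^'n) \<times> real.
           bilipschitz (2^8 * N^2 * (real H)^2) \<Psi>
         \<and> (\<forall>x t. t \<notin> {1/2 <..< real H + 1/2} \<longrightarrow> \<Psi> (x, t) = (x, t))
         \<and> (\<forall>m\<in>{1..H}. \<Psi> ` X m \<subseteq> (scaled_lattice N - int_lattice) \<times> {real m})
         \<and> (\<forall>p\<in>(\<Union>m\<in>{1..H}. X m). norm (fst (\<Psi> p) - fst p) \<le> s^2)"
proof -
  define XX where "XX = (\<Union>m\<in>{1..H}. X m)"
  have subXX: "XX \<subseteq> UNIV \<times> {1/2 + s .. real H + 1/2 - s}" using Xsub unfolding XX_def by auto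
  have sepXX: "s_separated s XX" using sep unfolding XX_def .
  obtain y where y: "inj_on y XX" "\<And>p. p \<in> XX \<Longrightarrow> y p \<in> scaled_lattice N - int_lattice"
      "\<And>p. p \<in> XX \<Longrightarrow> norm (y p - fst p) \<le> s^2"
    using assign[OF H s N subXX sepXX] by blast
  have D1: "CARD('n) \<ge> 1" using zero_less_card_finite[where 'a='n] by linarith
  have N8: "N \<ge> 8/s" using numeric(1)[OF D1 H s N] .
  have "8/s \<ge> 32" using s by (simp add: field_simps)
  then have N32: "N \<ge> 32" using N8 by linarith
  have Npos: "N > 0" using N32 by simp
  have Hr: "real H \<ge> 1" using H by simp
  define mi where "mi p = (THE m. m \<in> {1..H} \<and> p \<in> X m)" for p
  have mi: "mi p = m" if "m \<in> {1..H}" "p \<in> X m" for m p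
    unfolding mi_def
  proof (rule the_equality)
    show "m \<in> {1..H} \<and> p \<in> X m" using that by simp
    fix m' assume "m' \<in> {1..H} \<and> p \<in> X m'"
    then show "m' = m" using disj that by blast
  qed
  have miXX: "mi p \<in> {1..H} \<and> p \<in> X (mi p)" if pXX: "p \<in> XX" for p
  proof -
    obtain m where "m \<in> {1..H}" "p \<in> X m" using pXX unfolding XX_def by blast
    then show ?thesis using mi[of m p] by simp
  qed
  define CC where "CC = y ` XX"
  define pc where "pc c = inv_into XX y c" for c
  have pcy: "pc (y p) = p" if "p \<in> XX" for p unfolding pc_def using inv_into_f_f[OF y(1) that] .
  have pcC: "pc c \<in> XX" if "c \<in> CC" for c unfolding pc_def using that CC_def by (simp add: inv_into_into)
  define hh where "hh c x = hfun H (snd (pc c)) (real (mi (pc c))) x" for c x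
  have hp: "1/2 + s \<le> snd (pc c)" "snd (pc c) \<le> real H + 1/2 - s" "1 \<le> real (mi (pc c))" "real (mi (pc c)) \<le> real H"
    if "c \<in> CC" for c
    using pcC[OF that] subXX miXX[OF pcC[OF that]] by auto
  note hprops = hfun_props[OF H s hp(1,2,3,4)]
  define r2 where "r2 = 1/(2*N)"
  have r2: "r2 > 0" unfolding r2_def using Npos by simp
  have sepC: "s_separated (2*r2) CC"
    unfolding s_separated_def
  proof (intro ballI impI)
    fix a b assume ab: "a \<in> CC" "b \<in> CC" "a \<noteq> b"
    have "a \<in> scaled_lattice N" "b \<in> scaled_lattice N" using ab y(2) unfolding CC_def by auto
    then have "dist a b \<ge> 1/N" using lattice_sep[OF Npos] ab(3) by blast
    then show "2 * r2 \<le> dist a b" unfolding r2_def using Npos by simp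
  qed
  define u1 where "u1 p = (y p - fst p, 0::real)" for p
  define g where "g = bump XX (s/2) u1"
  have sep1: "s_separated (2*(s/2)) XX" using sepXX by simp
  have s2: "s/2 > 0" using s by simp
  have u1b: "\<forall>c\<in>XX. norm (u1 c) \<le> s^2" unfolding u1_def using y(3) by (simp add: norm_Pair)
  have glip: "norm (g a - g b) \<le> (2* s) * dist a b" for a b
  proof -
    have "norm (g a - g b) \<le> (s^2 / (s/2)) * dist a b" unfolding g_def
      by (rule bump_lip[OF sep1 s2 u1b]) simp
    also have "s^2 / (s/2) = 2* s" using s by (simp add: power2_eq_square)
    finally show ?thesis .
  qed
  define \<Psi>1 where "\<Psi>1 z = z + g z" for z
  have st1: "dist (\<Psi>1 a) (\<Psi>1 b) \<le> (3/2) * dist a b" "dist a b \<le> 2 * dist (\<Psi>1 a) (\<Psi>1 b)" for a b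
    unfolding \<Psi>1_def using step1[of g "2* s", OF glip] s by auto
  define F where "F z x = x + bump CC r2 (\<lambda>c. hh c x - x) z" for z x
  define \<Psi> where "\<Psi> p = (fst (\<Psi>1 p), F (fst (\<Psi>1 p)) (snd (\<Psi>1 p)))" for p
  have amono: "\<And>c t1 t2. c \<in> CC \<Longrightarrow> t1 \<le> t2 \<Longrightarrow> (1/(2*real H))*(t2-t1) \<le> hh c t2 - hh c t1 \<and> hh c t2 - hh c t1 \<le> (real H/s)*(t2-t1)"
    unfolding hh_def using hprops(3) by blast
  have hbd: "\<And>c t. c \<in> CC \<Longrightarrow> \<bar>hh c t - t\<bar> \<le> real H"
    unfolding hh_def using hprops(4) by blast
  have a0: "0 < 1/(2*real H)" and a1: "1/(2*real H) \<le> 1" using Hr by auto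
  have b1: "1 \<le> real H / s" using Hr s by (simp add: field_simps)
  have M0: "0 \<le> real H" by simp
  note st2 = step2[OF sepC r2 amono hbd a0 a1 b1 M0]
  define K1 where "K1 = 1 + real H/r2 + real H/s"
  define K2 where "K2 = 1 + (real H/r2)/(1/(2*real H)) + 1/(1/(2*real H))"
  have st2a: "dist (\<Psi> p) (\<Psi> q) \<le> K1 * dist (\<Psi>1 p) (\<Psi>1 q)" for p q
  proof -
    obtain z1 t1 where 1: "\<Psi>1 p = (z1, t1)" by fastforce
    obtain z2 t2 where 2: "\<Psi>1 q = (z2, t2)" by fastforce
    have "dist (z1, t1 + bump CC r2 (\<lambda>c. hh c t1 - t1) z1) (z2, t2 + bump CC r2 (\<lambda>c. hh c t2 - t2) z2)
      \<le> (1 + real H / r2 + real H / s) * dist (z1, t1) (z2, t2)" by (rule st2(1))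
    then show ?thesis unfolding \<Psi>_def K1_def F_def 1 2 by simp
  qed
  have st2b: "dist (\<Psi>1 p) (\<Psi>1 q) \<le> K2 * dist (\<Psi> p) (\<Psi> q)" for p q
  proof -
    obtain z1 t1 where 1: "\<Psi>1 p = (z1, t1)" by fastforce
    obtain z2 t2 where 2: "\<Psi>1 q = (z2, t2)" by fastforce
    have "dist (z1, t1) (z2, t2) \<le> (1 + (real H / r2) / (1/(2*real H)) + 1/(1/(2*real H)))
      * dist (z1, t1 + bump CC r2 (\<lambda>c. hh c t1 - t1) z1) (z2, t2 + bump CC r2 (\<lambda>c. hh c t2 - t2) z2)"
      by (rule st2(2))
    then show ?thesis unfolding \<Psi>_def K2_def F_def 1 2 by simp
  qed
  define L where "L = (2::real)^8 * N^2 * (real H)^2"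
  have NH: "N * real H \<ge> 1 * 1" using N32 Hr by (intro mult_mono) auto
  define P where "P = N * real H"
  have P1: "P \<ge> 1" unfolding P_def using NH by simp
  have Hr2: "real H / r2 = 2 * P" unfolding r2_def P_def using Npos by simp
  have is8: "1/s \<le> N/8" using N8 s by (simp add: field_simps)
  have "real H * (1/s) \<le> real H * (N/8)" using is8 Hr by (intro mult_left_mono) auto
  moreover have "real H / s = real H * (1/s)" by simp
  moreover have "real H * (N/8) = P/8" unfolding P_def by simp
  ultimately have Hs: "real H / s \<le> P" using P1 by linarith
  have PP: "P * P \<ge> P * 1" using P1 by (intro mult_left_mono) auto
  have LP: "L = 256 * (P * P)" unfolding L_def P_def by (simp add: power2_eq_square)
  have K1e: "K1 = 1 + 2 * P + real H / s" unfolding K1_def Hr2 by simp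
  have K1b: "(3/2) * K1 \<le> L" using K1e Hs P1 LP PP by linarith
  define Q where "Q = P * real H"
  have Q1: "Q \<ge> 1 * 1" unfolding Q_def using P1 Hr by (intro mult_mono) auto
  have QH: "Q \<ge> 1 * real H" unfolding Q_def using P1 Hr by (intro mult_right_mono) auto
  have K2e: "K2 = 1 + 4 * Q + 2 * real H" unfolding K2_def Hr2 Q_def using Hr by simp
  have LQ: "L = 256 * (N * Q)" unfolding L_def Q_def P_def by (simp add: power2_eq_square)
  have NQ: "N * Q \<ge> 1 * Q" using N32 Q1 by (intro mult_right_mono) auto
  have K2b: "2 * K2 \<le> L" using K2e LQ Q1 QH NQ by linarith
  have K1p: "K1 \<ge> 0" unfolding K1_def using r2 s by simp
  have bil: "bilipschitz L \<Psi>"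
  proof (rule bilipI)
    show "L \<ge> 0" unfolding L_def by simp
    fix a b
    have "dist (\<Psi> a) (\<Psi> b) \<le> K1 * ((3/2) * dist a b)"
      using st2a[of a b] mult_left_mono[OF st1(1)[of a b] K1p] by linarith
    also have "\<dots> = ((3/2) * K1) * dist a b" by simp
    also have "\<dots> \<le> L * dist a b" using K1b by (intro mult_right_mono) auto
    finally show "dist (\<Psi> a) (\<Psi> b) \<le> L * dist a b" .
    have "dist a b \<le> 2 * (K2 * dist (\<Psi> a) (\<Psi> b))" using st1(2)[of a b] st2b[of a b] by linarith
    also have "\<dots> = (2 * K2) * dist (\<Psi> a) (\<Psi> b)" by simp
    also have "\<dots> \<le> L * dist (\<Psi> a) (\<Psi> b)" using K2b by (intro mult_right_mono) auto
    finally show "dist a b \<le> L * dist (\<Psi> a) (\<Psi> b)" .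
  qed
  have fix1: "\<Psi> (x, t) = (x, t)" if t: "t \<notin> {1/2 <..< real H + 1/2}" for x t
  proof -
    have "\<forall>p\<in>XX. dist (x, t) p \<ge> s/2"
    proof
      fix p assume p: "p \<in> XX"
      have "1/2 + s \<le> snd p" "snd p \<le> real H + 1/2 - s" using subXX p by auto
      then have "\<bar>t - snd p\<bar> \<ge> s/2" using t s by auto
      then show "dist (x, t) p \<ge> s/2" using dist_snd_le[of "(x,t)" p] by (simp add: dist_real_def)
    qed
    then have "g (x, t) = 0" unfolding g_def by (rule bump_out)
    then have P1: "\<Psi>1 (x, t) = (x, t)" unfolding \<Psi>1_def by simp
    have "\<forall>c\<in>CC. hh c t - t = 0" unfolding hh_def using hprops(2) t by auto
    then have "bump CC r2 (\<lambda>c. hh c t - t) x = 0" by (rule bump_zero)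
    then show ?thesis unfolding \<Psi>_def P1 F_def by simp
  qed
  have onX: "\<Psi> p = (y p, real m)" if m: "m \<in> {1..H}" "p \<in> X m" for m p
  proof -
    have pX: "p \<in> XX" using m unfolding XX_def by auto
    have d0: "dist p p < s/2" using s by simp
    have "g p = (1 - dist p p / (s/2)) *\<^sub>R u1 p" unfolding g_def by (rule bump_at[OF sep1 pX d0])
    then have "g p = u1 p" by simp
    then have P1: "\<Psi>1 p = (y p, snd p)" unfolding \<Psi>1_def u1_def by (cases p) simp
    have yC: "y p \<in> CC" unfolding CC_def using pX by simp
    have "bump CC r2 (\<lambda>c. hh c (snd p) - snd p) (y p) = (1 - dist (y p) (y p) / r2) *\<^sub>R (hh (y p) (snd p) - snd p)"
      by (rule bump_at[OF sepC yC]) (simp add: r2)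
    also have "\<dots> = hh (y p) (snd p) - snd p" by simp
    also have "hh (y p) (snd p) = real m"
    proof -
      have t: "1/2 + s \<le> snd p" "snd p \<le> real H + 1/2 - s" using subXX pX by auto
      have mm: "1 \<le> real m" "real m \<le> real H" using m(1) by auto
      show ?thesis unfolding hh_def pcy[OF pX] mi[OF m] by (rule hfun_props(1)[OF H s t mm])
    qed
    finally have "F (y p) (snd p) = real m" unfolding F_def by simp
    then show ?thesis unfolding \<Psi>_def P1 by simp
  qed
  show ?thesis
  proof (intro exI[of _ \<Psi>] conjI)
    show "bilipschitz (2^8 * N^2 * (real H)^2) \<Psi>" using bil unfolding L_def .
    show "\<forall>x t. t \<notin> {1/2 <..< real H + 1/2} \<longrightarrow> \<Psi> (x, t) = (x, t)" using fix1 by blast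
    show "\<forall>m\<in>{1..H}. \<Psi> ` X m \<subseteq> (scaled_lattice N - int_lattice) \<times> {real m}"
    proof (intro ballI subsetI)
      fix m z assume m: "m \<in> {1..H}" and z: "z \<in> \<Psi> ` X m"
      then obtain p where p: "p \<in> X m" "z = \<Psi> p" by auto
      have "p \<in> XX" using m p unfolding XX_def by auto
      then show "z \<in> (scaled_lattice N - int_lattice) \<times> {real m}" using onX[OF m p(1)] y(2) p by simp
    qed
    show "\<forall>p\<in>(\<Union>m\<in>{1..H}. X m). norm (fst (\<Psi> p) - fst p) \<le> s^2"
    proof
      fix p assume "p \<in> (\<Union>m\<in>{1..H}. X m)"
      then obtain m where m: "m \<in> {1..H}" "p \<in> X m" by auto
      have "p \<in> XX" using m unfolding XX_def by auto
      then show "norm (fst (\<Psi> p) - fst p) \<le> s^2" using onX[OF m] y(3) by simp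
    qed
  qed
qed


end
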